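(* For positive integers $n$ and $a$ with $2a\le n$, $S_{\mathcal{Q}}(K_{a,n-a})\ge S_{\mathcal{Q}}(K_{\lfloor n/2\rfloor,\lceil n/2\rceil})$, with equality if and only if $K_{a,n-a}\cong K_{\lfloor n/2\rfloor,\lceil n/2\rceil}$ (i.e. $a=\lfloor n/2\rfloor$).
   Context: For a connected graph $G$ with vertex set $\{v_1,\dots,v_n\}$: $\mathcal{D}(G)=(d_G(v_i,v_j))$ is the distance matrix, $D_i=\sum_j d_G(v_i,v_j)$, $Tr(G)=\mathrm{diag}(D_1,\dots,D_n)$, $\mathcal{Q}(G)=Tr(G)+\mathcal{D}(G)$, and $S_{\mathcal{Q}}(G)$ is the difference between the largest and the least eigenvalue of $\mathcal{Q}(G)$. $K_{a,b}$ is the complete bipartite graph with parts of sizes $a,b$. *)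

theory Defs
  imports "Jordan_Normal_Form.Char_Poly"
begin

text \<open>Graphs on the vertex set {0..<n}, given by an adjacency predicate E.\<close>

definition graph_dist :: "(nat \<Rightarrow> nat \<Rightarrow> bool) \<Rightarrow> nat \<Rightarrow> nat \<Rightarrow> nat" where
  "graph_dist E u v = (LEAST k. (u, v) \<in> {(x, y). E x y} ^^ k)"

definition dist_matrix :: "nat \<Rightarrow> (nat \<Rightarrow> nat \<Rightarrow> bool) \<Rightarrow> real mat" where
  "dist_matrix n E = mat n n (\<lambda>(i, j). real (graph_dist E i j))"

definition transmission :: "nat \<Rightarrow> (nat \<Rightarrow> nat \<Rightarrow> bool) \<Rightarrow> nat \<Rightarrow> real" where
  "transmission n E i = (\<Sum>j<n. real (graph_dist E i j))"

definition Tr_matrix :: "nat \<Rightarrow> (nat \<Rightarrow> nat \<Rightarrow> bool) \<Rightarrow> real mat" where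
  "Tr_matrix n E = mat n n (\<lambda>(i, j). if i = j then transmission n E i else 0)"

definition distQ_matrix :: "nat \<Rightarrow> (nat \<Rightarrow> nat \<Rightarrow> bool) \<Rightarrow> real mat" where
  "distQ_matrix n E = Tr_matrix n E + dist_matrix n E"

definition Q_spread :: "nat \<Rightarrow> (nat \<Rightarrow> nat \<Rightarrow> bool) \<Rightarrow> real" where
  "Q_spread n E = Max {k. eigenvalue (distQ_matrix n E) k} - Min {k. eigenvalue (distQ_matrix n E) k}"

definition complete_bipartite :: "nat \<Rightarrow> nat \<Rightarrow> nat \<Rightarrow> nat \<Rightarrow> bool" where
  "complete_bipartite a b u v = (u < a + b \<and> v < a + b \<and> ((u < a) \<noteq> (v < a)))"

end

theory Submission
  imports Defs
begin

lemma relpow2_iff: "(u,v) \<in> R ^^ 2 \<longleftrightarrow> (\<exists>w. (u,w) \<in> R \<and> (w,v) \<in> R)"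
  by (auto simp: numeral_2_eq_2)

lemma cb_dist:
  assumes "0 < a" "0 < b" "i < a + b" "j < a + b"
  shows "graph_dist (complete_bipartite a b) i j =
           (if i = j then 0 else if (i < a) = (j < a) then 2 else 1)"
proof -
  let ?R = "{(x, y). complete_bipartite a b x y}"
  show ?thesis
  proof (cases "i = j")
    case True
    then show ?thesis unfolding graph_dist_def by (auto intro!: Least_equality)
  next
    case ne: False
    show ?thesis
    proof (cases "(i < a) = (j < a)")
      case False
      have "(i,j) \<in> ?R ^^ 1" using assms False by (simp add: complete_bipartite_def)
      moreover have "(i,j) \<notin> ?R ^^ 0" using ne by simp
      ultimately have "(LEAST k. (i, j) \<in> ?R ^^ k) = 1"
      proof (intro Least_equality)
        fix y assume "(i, j) \<in> ?R ^^ y"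
        then show "1 \<le> y" using ne by (cases y) auto
      qed simp
      then show ?thesis using ne False unfolding graph_dist_def by simp
    next
      case True
      have w: "(i, (if i < a then a else 0)) \<in> ?R \<and> ((if i < a then a else 0), j) \<in> ?R"
        using assms True by (auto simp: complete_bipartite_def)
      have "(i,j) \<in> ?R ^^ 2" using w unfolding relpow2_iff by blast
      moreover have "(i,j) \<notin> ?R ^^ 0" using ne by simp
      moreover have "(i,j) \<notin> ?R ^^ 1" using True by (simp add: complete_bipartite_def)
      ultimately have "(LEAST k. (i, j) \<in> ?R ^^ k) = 2"
      proof (intro Least_equality)
        fix y assume "(i, j) \<in> ?R ^^ y"
        then show "2 \<le> y" using ne True
          by (cases y; cases "y - 1") (auto simp: complete_bipartite_def)
      qed (use \<open>(i,j) \<in> ?R ^^ 2\<close> in simp)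
      then show ?thesis using ne True unfolding graph_dist_def by simp
    qed
  qed
qed

lemma sum_split_at:
  fixes a N :: nat
  assumes "a \<le> N"
  shows "(\<Sum>j<N. f j) = (\<Sum>j<a. f j) + (\<Sum>j\<in>{a..<N}. f j)"
proof -
  have "{..<N} = {..<a} \<union> {a..<N}" using ivl_disj_un_one(2)[OF assms] by simp
  then show ?thesis by (simp add: sum.union_disjoint ivl_disj_int_one(2))
qed

lemma cb_trans:
  assumes "0 < a" "0 < b" "i < a + b"
  shows "transmission (a+b) (complete_bipartite a b) i =
           (if i < a then 2*real a + real b - 2 else real a + 2*real b - 2)"
proof -
  have "transmission (a+b) (complete_bipartite a b) i =
        (\<Sum>j<a+b. (if (i<a) = (j<a) then 2 else 1) - (if j = i then 2 else 0 :: real))"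
    unfolding transmission_def
    by (rule sum.cong) (use assms in \<open>auto simp: cb_dist\<close>)
  also have "\<dots> = (\<Sum>j<a+b. (if (i<a) = (j<a) then 2 else 1 :: real)) - 2"
    using assms by (simp add: sum_subtractf)
  also have "(\<Sum>j<a+b. (if (i<a) = (j<a) then 2 else 1 :: real)) =
     (\<Sum>j<a. (if (i<a) = (j<a) then 2 else 1 :: real)) + (\<Sum>j\<in>{a..<a+b}. (if (i<a) = (j<a) then 2 else 1 :: real))"
    by (rule sum_split_at) simp
  finally show ?thesis by auto
qed

definition "cQ a b i = (if i < a then 2*real a + real b - 4 else real a + 2*real b - 4)"

lemma cb_Q_entry:
  assumes "0 < a" "0 < b" "i < a + b" "j < a + b"
  shows "distQ_matrix (a+b) (complete_bipartite a b) $$ (i,j) =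
     (if i = j then cQ a b i else 0) + (if (i<a) = (j<a) then 2 else 1)"
  using assms unfolding distQ_matrix_def Tr_matrix_def dist_matrix_def cQ_def
  by (auto simp: cb_dist cb_trans)

lemma cb_mult:
  assumes "0 < a" "0 < b" "v \<in> carrier_vec (a+b)" "i < a + b"
  shows "(distQ_matrix (a+b) (complete_bipartite a b) *\<^sub>v v) $ i =
     cQ a b i * v $ i + (if i < a then 2 * (\<Sum>j<a. v$j) + (\<Sum>j\<in>{a..<a+b}. v$j)
                                   else (\<Sum>j<a. v$j) + 2 * (\<Sum>j\<in>{a..<a+b}. v$j))"
proof -
  let ?Q = "distQ_matrix (a+b) (complete_bipartite a b)"
  have dims: "dim_row ?Q = a+b" "dim_col ?Q = a+b"
    by (simp_all add: distQ_matrix_def Tr_matrix_def dist_matrix_def)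
  have "(?Q *\<^sub>v v) $ i = (\<Sum>j<a+b. ?Q $$ (i,j) * v $ j)"
    using assms dims by (simp add: scalar_prod_def lessThan_atLeast0)
  also have "\<dots> = (\<Sum>j<a+b. (if i = j then cQ a b i * v$j else 0) + (if (i<a) = (j<a) then 2 else 1) * v$j)"
    by (rule sum.cong) (use assms in \<open>auto simp: cb_Q_entry algebra_simps\<close>)
  also have "\<dots> = cQ a b i * v $ i + (\<Sum>j<a+b. (if (i<a) = (j<a) then 2 else 1) * v$j)"
    using assms by (simp add: sum.distrib)
  also have "(\<Sum>j<a+b. (if (i<a) = (j<a) then 2 else 1) * v$j) =
     (\<Sum>j<a. (if (i<a) = (j<a) then 2 else 1) * v$j) + (\<Sum>j\<in>{a..<a+b}. (if (i<a) = (j<a) then 2 else 1) * v$j)"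
    by (rule sum_split_at) simp
  finally show ?thesis by (auto simp: sum_distrib_left)
qed

definition "pQ a b = 4*real a + real b - 4"
definition "qQ a b = real a + 4*real b - 4"
definition "DQ a b = (pQ a b - qQ a b)^2 + 4 * real a * real b"
definition "rp a b = (pQ a b + qQ a b + sqrt (DQ a b)) / 2"
definition "rm a b = (pQ a b + qQ a b - sqrt (DQ a b)) / 2"

lemma DQ_nonneg: "DQ a b \<ge> 0" unfolding DQ_def by simp

lemma quad_roots:
  assumes "(l - pQ a b) * (l - qQ a b) = real a * real b"
  shows "l = rp a b \<or> l = rm a b"
proof -
  have "(2*l - pQ a b - qQ a b)^2 = DQ a b"
    using assms unfolding DQ_def by (simp add: power2_eq_square algebra_simps)
  then have "\<bar>2*l - pQ a b - qQ a b\<bar> = sqrt (DQ a b)"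
    by (metis real_sqrt_abs)
  then show ?thesis unfolding rp_def rm_def by (auto simp: abs_if split: if_splits)
qed

lemma quad_roots_sat:
  assumes "l = rp a b \<or> l = rm a b"
  shows "(l - pQ a b) * (l - qQ a b) = real a * real b"
proof -
  have s: "sqrt (DQ a b) ^ 2 = (pQ a b - qQ a b)^2 + 4 * (real a * real b)"
    using DQ_nonneg unfolding DQ_def by simp
  have gen: "(l - p) * (l - q) = x" if "s^2 = (p - q)^2 + 4*x" "l = (p+q+s)/2 \<or> l = (p+q-s)/2"
    for p q s x l :: real
  proof -
    have "(l - p) * (l - q) = (s^2 - (p-q)^2) / 4"
      using that(2) by (elim disjE; hypsubst; simp add: field_simps power2_eq_square)
    then show ?thesis using that(1) by simp
  qed
  show ?thesis using gen[OF s] assms unfolding rp_def rm_def by blast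
qed

lemma ev_char:
  assumes a: "0 < a" and b: "0 < b"
    and ev: "eigenvalue (distQ_matrix (a+b) (complete_bipartite a b)) l"
  shows "l = cQ a b 0 \<or> l = cQ a b a \<or> l = rp a b \<or> l = rm a b"
proof -
  let ?Q = "distQ_matrix (a+b) (complete_bipartite a b)"
  have dims: "dim_row ?Q = a+b"
    by (simp_all add: distQ_matrix_def Tr_matrix_def dist_matrix_def)
  obtain v where v: "v \<in> carrier_vec (a+b)" "v \<noteq> 0\<^sub>v (a+b)" "?Q *\<^sub>v v = l \<cdot>\<^sub>v v"
    using ev unfolding eigenvalue_def eigenvector_def dims by auto
  define SA where "SA = (\<Sum>j<a. v$j)"
  define SB where "SB = (\<Sum>j\<in>{a..<a+b}. v$j)"
  define c1 where "c1 = cQ a b 0"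
  define c2 where "c2 = cQ a b a"
  have eqA: "l * v$i = c1 * v$i + (2*SA + SB)" if "i < a" for i
  proof -
    have "(?Q *\<^sub>v v) $ i = l * v $ i" using v that by simp
    then show ?thesis using cb_mult[OF a b v(1), of i] that a
      unfolding SA_def SB_def c1_def cQ_def by simp
  qed
  have eqB: "l * v$i = c2 * v$i + (SA + 2*SB)" if "a \<le> i" "i < a+b" for i
  proof -
    have "(?Q *\<^sub>v v) $ i = l * v $ i" using v that by simp
    then show ?thesis using cb_mult[OF a b v(1), of i] that a
      unfolding SA_def SB_def c2_def cQ_def by simp
  qed
  show ?thesis
  proof (rule ccontr)
    assume "\<not> ?thesis"
    then have n1: "l \<noteq> c1" and n2: "l \<noteq> c2" and nr: "\<not> (l = rp a b \<or> l = rm a b)"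
      unfolding c1_def c2_def by auto
    have vA: "v$i = (2*SA + SB) / (l - c1)" if "i < a" for i
      using eqA[OF that] n1 by (simp add: field_simps)
    have vB: "v$i = (SA + 2*SB) / (l - c2)" if "a \<le> i" "i < a+b" for i
      using eqB[OF that] n2 by (simp add: field_simps)
    have "SA = (\<Sum>j<a. (2*SA + SB) / (l - c1))"
      unfolding SA_def[symmetric] by (subst SA_def, rule sum.cong) (auto simp: vA)
    then have SA2: "SA = real a * ((2*SA + SB) / (l - c1))" by simp
    have "SB = (\<Sum>j\<in>{a..<a+b}. (SA + 2*SB) / (l - c2))"
      by (subst SB_def, rule sum.cong) (auto simp: vB)
    then have SB2: "SB = real b * ((SA + 2*SB) / (l - c2))" by simp
    have e1: "(l - pQ a b) * SA = real a * SB"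
      using SA2 n1 unfolding c1_def cQ_def pQ_def using a
      by (simp add: field_simps split: if_splits)
    have e2: "(l - qQ a b) * SB = real b * SA"
      using SB2 n2 unfolding c2_def cQ_def qQ_def
      by (simp add: field_simps split: if_splits)
    have "(l - pQ a b) * (l - qQ a b) \<noteq> real a * real b"
      using quad_roots nr by blast
    then have "SA = 0 \<and> SB = 0"
    proof -
      assume ne: "(l - pQ a b) * (l - qQ a b) \<noteq> real a * real b"
      have "(l - pQ a b) * (l - qQ a b) * SA = real a * real b * SA"
        using e1 e2 by (metis mult.assoc mult.commute)
      then have "SA = 0" using ne by simp
      moreover have "(l - pQ a b) * (l - qQ a b) * SB = real a * real b * SB"
        using e1 e2 by (metis mult.assoc mult.commute)
      then have "SB = 0" using ne by simp
      ultimately show ?thesis by simp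
    qed
    then have "v = 0\<^sub>v (a+b)"
    proof (intro eq_vecI)
      fix i assume "i < dim_vec (0\<^sub>v (a+b) :: real vec)"
      then show "v $ i = 0\<^sub>v (a+b) $ i" using vA vB \<open>SA = 0 \<and> SB = 0\<close>
        by (cases "i < a") auto
    qed (use v(1) in simp)
    with v(2) show False by simp
  qed
qed

lemma dimQ: "distQ_matrix N E \<in> carrier_mat N N"
  by (simp add: distQ_matrix_def Tr_matrix_def dist_matrix_def)

lemma ev_root:
  assumes a: "0 < a" and b: "0 < b" and l: "l = rp a b \<or> l = rm a b"
  shows "eigenvalue (distQ_matrix (a+b) (complete_bipartite a b)) l"
proof -
  let ?Q = "distQ_matrix (a+b) (complete_bipartite a b)"
  define v where "v = vec (a+b) (\<lambda>i. if i < a then real b else l - pQ a b)"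
  have vc: "v \<in> carrier_vec (a+b)" unfolding v_def by simp
  have "(\<Sum>j<a. v$j) = (\<Sum>j<a. real b)" by (rule sum.cong) (auto simp: v_def)
  then have SA: "(\<Sum>j<a. v$j) = real a * real b" by simp
  have "(\<Sum>j\<in>{a..<a+b}. v$j) = (\<Sum>j\<in>{a..<a+b}. l - pQ a b)" by (rule sum.cong) (auto simp: v_def)
  then have SB: "(\<Sum>j\<in>{a..<a+b}. v$j) = real b * (l - pQ a b)" by simp
  have quad: "(l - pQ a b) * (l - qQ a b) = real a * real b"
    using quad_roots_sat[OF l] .
  have "?Q *\<^sub>v v = l \<cdot>\<^sub>v v"
  proof (intro eq_vecI)
    fix i assume "i < dim_vec (l \<cdot>\<^sub>v v)"
    then have i: "i < a + b" using vc by simp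
    show "(?Q *\<^sub>v v) $ i = (l \<cdot>\<^sub>v v) $ i"
    proof (cases "i < a")
      case True
      have vi: "v $ i = real b" using True i by (simp add: v_def)
      have m: "(?Q *\<^sub>v v) $ i = cQ a b i * v $ i + (2 * (\<Sum>j<a. v$j) + (\<Sum>j\<in>{a..<a+b}. v$j))"
        using cb_mult[OF a b vc i] True by (simp only: if_True True)
      have c: "cQ a b i = 2*real a + real b - 4" using True by (simp add: cQ_def)
      have r: "(l \<cdot>\<^sub>v v) $ i = l * v $ i" using i vc by simp
      have alg: "(2*real a + real b - 4) * real b + (2 * (real a * real b) + real b * (l - pQ a b)) = l * real b"
        unfolding pQ_def by (simp add: algebra_simps)
      show ?thesis unfolding m r c vi SA SB using alg .
    next
      case False
      have vi: "v $ i = l - pQ a b" using False i by (simp add: v_def)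
      have m: "(?Q *\<^sub>v v) $ i = cQ a b i * v $ i + ((\<Sum>j<a. v$j) + 2 * (\<Sum>j\<in>{a..<a+b}. v$j))"
        using cb_mult[OF a b vc i] False by (simp only: if_False False)
      have c: "cQ a b i = real a + 2*real b - 4" using False by (simp add: cQ_def)
      have r: "(l \<cdot>\<^sub>v v) $ i = l * v $ i" using i vc by simp
      have alg0: "(real a + 2*real b - 4) * (l - pQ a b) + (real a * real b + 2 * (real b * (l - pQ a b))) - l * (l - pQ a b)
              = real a * real b - (l - pQ a b) * (l - qQ a b)"
          unfolding qQ_def by (simp add: algebra_simps)
      have alg: "(real a + 2*real b - 4) * (l - pQ a b) + (real a * real b + 2 * (real b * (l - pQ a b))) = l * (l - pQ a b)"
        using alg0 quad by linarith
      show ?thesis unfolding m r c vi SA SB using alg .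
    qed
  qed (use vc dimQ[of "a+b"] in auto)
  moreover have "v \<noteq> 0\<^sub>v (a+b)"
  proof
    assume "v = 0\<^sub>v (a+b)"
    then have "v $ 0 = 0" using a by simp
    then show False using a b by (simp add: v_def)
  qed
  moreover have "dim_row ?Q = a + b" by (simp add: distQ_matrix_def Tr_matrix_def dist_matrix_def)
  ultimately have "eigenvector ?Q v (l)"
    unfolding eigenvector_def using vc by simp
  then show ?thesis unfolding eigenvalue_def by blast
qed

lemma ev_c1:
  assumes a: "2 \<le> a" and b: "0 < b"
  shows "eigenvalue (distQ_matrix (a+b) (complete_bipartite a b)) (cQ a b 0)"
proof -
  let ?Q = "distQ_matrix (a+b) (complete_bipartite a b)"
  have a0: "0 < a" using a by simp
  define v where "v = vec (a+b) (\<lambda>i. if i = 0 then 1 else if i = 1 then -1 else 0 :: real)"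
  have vc: "v \<in> carrier_vec (a+b)" unfolding v_def by simp
  have "(\<Sum>j<a. v$j) = (\<Sum>j<a. (if j = 0 then 1 else 0) - (if j = 1 then 1 else 0 :: real))"
    unfolding v_def by (rule sum.cong) auto
  also have "\<dots> = 0" using a by (simp add: sum_subtractf)
  finally have SA: "(\<Sum>j<a. v$j) = 0" .
  have "(\<Sum>j\<in>{a..<a+b}. v$j) = (\<Sum>j\<in>{a..<a+b}. 0)" using a by (intro sum.cong) (auto simp: v_def)
  then have SB: "(\<Sum>j\<in>{a..<a+b}. v$j) = 0" by simp
  have "?Q *\<^sub>v v = cQ a b 0 \<cdot>\<^sub>v v"
  proof (intro eq_vecI)
    fix i assume "i < dim_vec (cQ a b 0 \<cdot>\<^sub>v v)"
    then have i: "i < a + b" using vc by simp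
    show "(?Q *\<^sub>v v) $ i = (cQ a b 0 \<cdot>\<^sub>v v) $ i"
    proof -
      have "(?Q *\<^sub>v v) $ i = cQ a b i * v $ i"
        using cb_mult[OF a0 b vc i] SA SB by simp
      moreover have "cQ a b i * v $ i = cQ a b 0 * v $ i"
        using a i by (cases "i < a") (auto simp: cQ_def v_def)
      ultimately show ?thesis using i vc by simp
    qed
  qed (use vc dimQ[of "a+b"] in auto)
  moreover have "v \<noteq> 0\<^sub>v (a+b)"
  proof
    assume "v = 0\<^sub>v (a+b)"
    then have "v $ 0 = 0" using a by simp
    then show False using a b by (simp add: v_def)
  qed
  moreover have "dim_row ?Q = a + b" by (simp add: distQ_matrix_def Tr_matrix_def dist_matrix_def)
  ultimately have "eigenvector ?Q v (cQ a b 0)"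
    unfolding eigenvector_def using vc by simp
  then show ?thesis unfolding eigenvalue_def by blast
qed

lemma EV_sub:
  assumes "0 < a" "0 < b"
  shows "{k. eigenvalue (distQ_matrix (a+b) (complete_bipartite a b)) k} \<subseteq>
          {cQ a b 0, cQ a b a, rp a b, rm a b}"
  using ev_char[OF assms] by blast

lemma EV_fin:
  assumes "0 < a" "0 < b"
  shows "finite {k. eigenvalue (distQ_matrix (a+b) (complete_bipartite a b)) k}"
  by (rule finite_subset[OF EV_sub[OF assms]]) simp

lemma spread_lower1:
  assumes a: "0 < a" and b: "0 < b"
  shows "Q_spread (a+b) (complete_bipartite a b) \<ge> rp a b - rm a b"
proof -
  let ?S = "{k. eigenvalue (distQ_matrix (a+b) (complete_bipartite a b)) k}"
  have f: "finite ?S" using EV_fin[OF a b] .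
  have "rp a b \<in> ?S" "rm a b \<in> ?S" using ev_root[OF a b] by auto
  then have "Max ?S \<ge> rp a b" "Min ?S \<le> rm a b" using f by auto
  then show ?thesis unfolding Q_spread_def by linarith
qed

lemma spread_lower2:
  assumes a: "2 \<le> a" and b: "0 < b"
  shows "Q_spread (a+b) (complete_bipartite a b) \<ge> rp a b - cQ a b 0"
proof -
  let ?S = "{k. eigenvalue (distQ_matrix (a+b) (complete_bipartite a b)) k}"
  have a0: "0 < a" using a by simp
  have f: "finite ?S" using EV_fin[OF a0 b] .
  have "rp a b \<in> ?S" "cQ a b 0 \<in> ?S" using ev_root[OF a0 b] ev_c1[OF a b] by auto
  then have "Max ?S \<ge> rp a b" "Min ?S \<le> cQ a b 0" using f by auto
  then show ?thesis unfolding Q_spread_def by linarith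
qed

lemma spread_upper:
  assumes a: "0 < a" and ab: "a \<le> b"
  shows "Q_spread (a+b) (complete_bipartite a b) \<le> rp a b - cQ a b 0"
proof -
  have b: "0 < b" using a ab by simp
  let ?S = "{k. eigenvalue (distQ_matrix (a+b) (complete_bipartite a b)) k}"
  have f: "finite ?S" using EV_fin[OF a b] .
  have ne: "?S \<noteq> {}" using ev_root[OF a b] by auto
  have c0: "cQ a b 0 = 2*real a + real b - 4" using a by (simp add: cQ_def)
  have ca: "cQ a b a = real a + 2*real b - 4" by (simp add: cQ_def)
  have Dn: "0 \<le> DQ a b" by (rule DQ_nonneg)
  have s0: "0 \<le> sqrt (DQ a b)" using Dn by simp
  have "sqrt (DQ a b) \<le> real a + 3 * real b"
  proof (rule real_le_lsqrt)
    show "DQ a b \<le> (real a + 3 * real b)^2"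
    proof -
      have "(real a + 3 * real b)^2 - DQ a b = 4 * real a * (5 * real b - 2 * real a)"
        unfolding DQ_def pQ_def qQ_def by (simp add: power2_eq_square algebra_simps)
      moreover have "0 \<le> 4 * real a * (5 * real b - 2 * real a)" using ab by simp
      ultimately show ?thesis by linarith
    qed
  qed simp
  then have lo: "cQ a b 0 \<le> rm a b" unfolding c0 rm_def pQ_def qQ_def by simp
  have hi: "cQ a b a \<le> rp a b" using s0 unfolding ca rp_def pQ_def qQ_def by simp
  have le: "rm a b \<le> rp a b" using s0 unfolding rp_def rm_def by simp
  have c01: "cQ a b 0 \<le> cQ a b a" using ab unfolding c0 ca by simp
  have all: "cQ a b 0 \<le> k \<and> k \<le> rp a b" if "k \<in> ?S" for k
    using EV_sub[OF a b] that lo hi le c01 by auto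
  have "Max ?S \<le> rp a b" using all Max_in[OF f ne] by blast
  moreover have "Min ?S \<ge> cQ a b 0" using all Min_in[OF f ne] by blast
  ultimately show ?thesis unfolding Q_spread_def by linarith
qed

lemma g_form:
  assumes "0 < x"
  shows "rp x y - cQ x y 0 = (real x + 3 * real y + sqrt (DQ x y)) / 2"
  using assms unfolding rp_def cQ_def pQ_def qQ_def by (simp add: field_simps)

lemma DQ_alt: "DQ x y = 9 * (real x - real y)^2 + 4 * real x * real y"
  unfolding DQ_def pQ_def qQ_def by (simp add: power2_eq_square algebra_simps)

lemma g_mono:
  assumes "0 < a" "a < m" "m \<le> k"
  shows "rp a (m + k - a) - cQ a (m + k - a) 0 > rp m k - cQ m k 0"
proof -
  have ma: "real (m + k - a) = real m + real k - real a" using assms by (simp add: of_nat_diff)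
  have lin: "real a + 3 * real (m + k - a) > real m + 3 * real k" using assms ma by simp
  have "DQ a (m + k - a) - DQ m k = 32 * (real m - real a) * (real k - real a)"
    unfolding DQ_alt ma by (simp add: power2_eq_square algebra_simps)
  moreover have "32 * (real m - real a) * (real k - real a) > 0" using assms by simp
  ultimately have "DQ a (m + k - a) > DQ m k" by linarith
  then have sq: "sqrt (DQ a (m + k - a)) > sqrt (DQ m k)" by simp
  have g1: "rp a (m + k - a) - cQ a (m + k - a) 0 = (real a + 3 * real (m + k - a) + sqrt (DQ a (m + k - a))) / 2"
    using g_form assms(1) by blast
  have g2: "rp m k - cQ m k 0 = (real m + 3 * real k + sqrt (DQ m k)) / 2"
    using g_form assms by simp
  show ?thesis unfolding g1 g2 using add_strict_mono[OF lin sq] by (simp add: field_simps)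
qed

lemma star_gt:
  assumes m: "2 \<le> m" and e: "e \<le> 1"
  shows "rp 1 (2*m + e - 1) - rm 1 (2*m + e - 1) > rp m (m + e) - cQ m (m + e) 0"
proof -
  have n1: "real (2*m + e - 1) = 2 * real m + real e - 1" using m by (simp add: of_nat_diff)
  have Dn: "0 \<le> DQ m (m+e)" by (rule DQ_nonneg)
  have s1: "sqrt (DQ m (m + e)) \<le> 2 * real m + 3 * real e"
  proof (rule real_le_lsqrt)
    show "DQ m (m + e) \<le> (2 * real m + 3 * real e)^2"
    proof -
      have "(2 * real m + 3 * real e)^2 - DQ m (m + e) = 8 * real m * real e"
        unfolding DQ_alt by (simp add: power2_eq_square algebra_simps)
      moreover have "0 \<le> 8 * real m * real e" by simp
      ultimately show ?thesis by linarith
    qed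
  qed simp
  have g: "rp m (m + e) - cQ m (m + e) 0 \<le> 3 * real m + 3 * real e"
    using g_form[of m "m+e"] s1 m by simp
  have lhs: "rp 1 (2*m + e - 1) - rm 1 (2*m + e - 1) = sqrt (DQ 1 (2*m + e - 1))"
    unfolding rp_def rm_def by (simp add: field_simps)
  have "3 * real m + 3 * real e < sqrt (DQ 1 (2*m + e - 1))"
  proof (rule real_less_rsqrt)
    have e01: "e = 0 \<or> e = 1" using e by auto
    have D1: "DQ 1 (2*m + e - 1) = 9 * (2 - 2 * real m - real e)^2 + 4 * (2 * real m + real e - 1)"
      unfolding DQ_alt n1 by (simp add: power2_eq_square algebra_simps)
    show "(3 * real m + 3 * real e)^2 < DQ 1 (2*m + e - 1)"
    proof (cases "e = 0")
      case True
      have "(real m - 2) * (27 * real m - 10) \<ge> 0" using m by simp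
      then show ?thesis unfolding D1 using True by (simp add: power2_eq_square algebra_simps)
    next
      case False
      then have "e = 1" using e01 by simp
      have "real m * (27 * real m - 46) > 0" using m by simp
      then show ?thesis unfolding D1 using \<open>e = 1\<close> by (simp add: power2_eq_square algebra_simps)
    qed
  qed
  then show ?thesis using g lhs by linarith
qed

theorem corollary4p4:
  fixes n a :: nat
  assumes "0 < a" and "2 * a \<le> n"
  shows "Q_spread n (complete_bipartite a (n - a))
           \<ge> Q_spread n (complete_bipartite (n div 2) (n - n div 2)) \<and>
         (Q_spread n (complete_bipartite a (n - a))
           = Q_spread n (complete_bipartite (n div 2) (n - n div 2)) \<longleftrightarrow> a = n div 2)"
proof (cases "a = n div 2")
  case True
  then show ?thesis by simp
next
  case False
  define m where "m = n div 2"
  define k where "k = n - m"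
  have am: "a < m" using assms False unfolding m_def by linarith
  have m2: "2 \<le> m" using am assms by simp
  have mk: "m \<le> k" and nk: "n = m + k" unfolding m_def k_def by auto
  define e where "e = k - m"
  have e1: "e \<le> 1" and ke: "k = m + e" unfolding e_def k_def m_def by auto
  have up: "Q_spread n (complete_bipartite m (n - m)) \<le> rp m k - cQ m k 0"
    using spread_upper[of m k] m2 mk unfolding nk by simp
  have low: "Q_spread n (complete_bipartite a (n - a)) > rp m k - cQ m k 0"
  proof (cases "a = 1")
    case True
    have "Q_spread (1 + (n-1)) (complete_bipartite 1 (n - 1)) \<ge> rp 1 (n-1) - rm 1 (n-1)"
      by (rule spread_lower1) (use m2 nk mk in simp_all)
    moreover have "n - 1 = 2*m + e - 1" using nk ke by simp
    moreover have "rp 1 (2*m + e - 1) - rm 1 (2*m + e - 1) > rp m k - cQ m k 0"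
      using star_gt[OF m2 e1] ke by simp
    ultimately show ?thesis using True m2 nk by simp
  next
    case False
    then have a2: "2 \<le> a" using assms by simp
    have "Q_spread (a + (m + k - a)) (complete_bipartite a (m + k - a)) \<ge> rp a (m + k - a) - cQ a (m + k - a) 0"
      by (rule spread_lower2) (use a2 am mk in simp_all)
    moreover have "rp a (m + k - a) - cQ a (m + k - a) 0 > rp m k - cQ m k 0"
      by (rule g_mono) (use assms am mk in simp_all)
    moreover have "a + (m + k - a) = n" using nk am mk by simp
    ultimately show ?thesis using nk by simp
  qed
  show ?thesis using up low False unfolding m_def by simp
qed

end
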